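(* Fix integers $r\ge2$ and $k\ge1$. Let $H$ be a finite graph with minimum degree at least $2rk$, and let $G$ be the exact $(r-1)$-subdivision of $H$. Then $\mathrm{fw}_r(G)>k$.
   Context: Graphs are finite, simple, undirected. The exact $s$-subdivision of $H$ is obtained by replacing every edge of $H$ by a path of length $s+1$ (with new internal vertices). A $k$-flip of $G$ is obtained by choosing a partition of $V(G)$ into at most $k$ parts and, for some pairs $A,B$ of (possibly equal) parts, inverting adjacency of every pair of distinct $x\in A,y\in B$. Flipper game of radius $r$ and width $k$: $G_0=G$, runner chooses $v_0$; in round $i\ge1$ the flipper announces a $k$-flip $G_i$ of $G$, the runner moves from $v_{i-1}$ to $v_i$ along a path of length at most $r$ in $G_{i-1}$; the flipper wins if $v_i$ is isolated in $G_i$. $\mathrm{fw}_r(G)$ is the least $k$ for which the flipper has a winning strategy. *)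

theory Defs
  imports Main
begin

definition graph :: "'a set \<Rightarrow> ('a \<Rightarrow> 'a \<Rightarrow> bool) \<Rightarrow> bool" where
  "graph V E \<longleftrightarrow> finite V \<and> (\<forall>x y. E x y \<longrightarrow> x \<in> V \<and> y \<in> V)
     \<and> (\<forall>x y. E x y \<longrightarrow> E y x) \<and> (\<forall>x. \<not> E x x)"

definition degree :: "'a set \<Rightarrow> ('a \<Rightarrow> 'a \<Rightarrow> bool) \<Rightarrow> 'a \<Rightarrow> nat" where
  "degree V E v = card {u \<in> V. E v u}"

definition min_degree_ge :: "'a set \<Rightarrow> ('a \<Rightarrow> 'a \<Rightarrow> bool) \<Rightarrow> nat \<Rightarrow> bool" where
  "min_degree_ge V E d \<longleftrightarrow> (\<forall>v\<in>V. degree V E v \<ge> d)"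

text \<open>Exact s-subdivision. Each edge {u,v} with u < v is replaced by the path
  Inl u, Inr (u,v,1), ..., Inr (u,v,s), Inl v (of length s+1).\<close>

definition sub_node :: "nat \<Rightarrow> 'a \<Rightarrow> 'a \<Rightarrow> nat \<Rightarrow> 'a + ('a \<times> 'a \<times> nat)" where
  "sub_node s u v i = (if i = 0 then Inl u else if i = s + 1 then Inl v else Inr (u, v, i))"

definition subdiv_V :: "nat \<Rightarrow> ('a::linorder) set \<Rightarrow> ('a \<Rightarrow> 'a \<Rightarrow> bool)
    \<Rightarrow> ('a + ('a \<times> 'a \<times> nat)) set" where
  "subdiv_V s V E = Inl ` V \<union> {Inr (u, v, i) | u v i. E u v \<and> u < v \<and> 1 \<le> i \<and> i \<le> s}"

definition subdiv_E :: "nat \<Rightarrow> ('a::linorder) set \<Rightarrow> ('a \<Rightarrow> 'a \<Rightarrow> bool)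
    \<Rightarrow> ('a + ('a \<times> 'a \<times> nat)) \<Rightarrow> ('a + ('a \<times> 'a \<times> nat)) \<Rightarrow> bool" where
  "subdiv_E s V E x y \<longleftrightarrow> (\<exists>u v i. E u v \<and> u < v \<and> i \<le> s \<and>
      ((x = sub_node s u v i \<and> y = sub_node s u v (i + 1)) \<or>
       (y = sub_node s u v i \<and> x = sub_node s u v (i + 1))))"

text \<open>k-flips: a partition of V into at most k parts (given by a labelling p into {0..<k},
  parts = nonempty fibres), and a symmetric set R of pairs of parts whose adjacency is inverted.\<close>

definition is_flip :: "nat \<Rightarrow> 'b set \<Rightarrow> ('b \<Rightarrow> 'b \<Rightarrow> bool) \<Rightarrow> ('b \<Rightarrow> 'b \<Rightarrow> bool) \<Rightarrow> bool" where
  "is_flip k V E F \<longleftrightarrow> (\<exists>(p :: 'b \<Rightarrow> nat) (R :: nat \<Rightarrow> nat \<Rightarrow> bool).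
      (\<forall>x\<in>V. p x < k) \<and> (\<forall>i j. R i j = R j i) \<and>
      (\<forall>x y. F x y \<longleftrightarrow> x \<in> V \<and> y \<in> V \<and> x \<noteq> y \<and> (E x y \<noteq> R (p x) (p y))))"

definition reach_within :: "nat \<Rightarrow> 'b set \<Rightarrow> ('b \<Rightarrow> 'b \<Rightarrow> bool) \<Rightarrow> 'b \<Rightarrow> 'b \<Rightarrow> bool" where
  "reach_within r V E v w \<longleftrightarrow> (\<exists>ps. ps \<noteq> [] \<and> hd ps = v \<and> last ps = w \<and> distinct ps \<and>
      set ps \<subseteq> V \<and> length ps \<le> r + 1 \<and> (\<forall>i < length ps - 1. E (ps ! i) (ps ! (i + 1))))"

definition isolated :: "('b \<Rightarrow> 'b \<Rightarrow> bool) \<Rightarrow> 'b \<Rightarrow> bool" where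
  "isolated F v \<longleftrightarrow> (\<forall>y. \<not> F v y)"

text \<open>A position is the previous graph
  G_{i-1} (current adjacency Ecur) together with the runner's vertex v_{i-1}.
  flipper_wins_from holds iff the flipper can force a win (in finitely many rounds)
  from that position: the least fixpoint (attractor) of the game.\<close>

inductive flipper_wins_from :: "nat \<Rightarrow> nat \<Rightarrow> 'b set \<Rightarrow> ('b \<Rightarrow> 'b \<Rightarrow> bool)
    \<Rightarrow> ('b \<Rightarrow> 'b \<Rightarrow> bool) \<Rightarrow> 'b \<Rightarrow> bool"
  for r k V E where
  step: "is_flip k V E F \<Longrightarrow>
     (\<forall>w. reach_within r V Ecur v w \<longrightarrow> isolated F w \<or> flipper_wins_from r k V E F w) \<Longrightarrow>
     flipper_wins_from r k V E Ecur v"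

definition flipper_wins :: "nat \<Rightarrow> nat \<Rightarrow> 'b set \<Rightarrow> ('b \<Rightarrow> 'b \<Rightarrow> bool) \<Rightarrow> bool" where
  "flipper_wins r k V E \<longleftrightarrow> (\<forall>v0\<in>V. flipper_wins_from r k V E E v0)"

definition fw :: "nat \<Rightarrow> 'b set \<Rightarrow> ('b \<Rightarrow> 'b \<Rightarrow> bool) \<Rightarrow> nat" where
  "fw r V E = (LEAST k. flipper_wins r k V E)"

end

theory Submission
  imports Defs
begin
fun rw :: "'b set \<Rightarrow> ('b \<Rightarrow> 'b \<Rightarrow> bool) \<Rightarrow> nat \<Rightarrow> 'b \<Rightarrow> 'b \<Rightarrow> bool" where
  "rw W F 0 x y = (x = y \<and> x \<in> W)"
| "rw W F (Suc n) x y = (rw W F n x y \<or> (\<exists>z. rw W F n x z \<and> F z y \<and> y \<in> W))"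

lemma rw_mono: "rw W F n x y \<Longrightarrow> n \<le> m \<Longrightarrow> rw W F m x y"
proof (induction m)
  case 0 then show ?case by auto
next
  case (Suc m)
  show ?case
  proof (cases "n = Suc m")
    case True then show ?thesis using Suc.prems by simp
  next
    case False
    then have "n \<le> m" using Suc.prems by simp
    then have "rw W F m x y" using Suc by blast
    then show ?thesis by simp
  qed
qed

lemma rw_step: "rw W F n x z \<Longrightarrow> F z y \<Longrightarrow> y \<in> W \<Longrightarrow> rw W F (Suc n) x y"
  by auto

lemma rw_in: "rw W F n x y \<Longrightarrow> x \<in> W \<and> y \<in> W"
  by (induction n arbitrary: y) auto

lemma rw_neighbor: "rw W F n x y \<Longrightarrow> x \<noteq> y \<Longrightarrow> \<exists>z. F x z"
proof (induction n arbitrary: y)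
  case 0 then show ?case by simp
next
  case (Suc n)
  from Suc.prems(1) show ?case
  proof (cases "rw W F n x y")
    case True then show ?thesis using Suc by blast
  next
    case False
    then obtain z where z: "rw W F n x z" "F z y" using Suc.prems(1) by auto
    show ?thesis
    proof (cases "x = z")
      case True then show ?thesis using z by blast
    next
      case False then show ?thesis using Suc.IH z by blast
    qed
  qed
qed

lemma rw_reach: "rw W F n x y \<Longrightarrow> reach_within n W F x y"
proof (induction n arbitrary: y)
  case 0
  then show ?case unfolding reach_within_def
    by (rule_tac x="[x]" in exI) auto
next
  case (Suc n)
  show ?case
  proof (cases "rw W F n x y")
    case True
    then have "reach_within n W F x y" using Suc.IH by blast
    then obtain ps where "ps \<noteq> [] \<and> hd ps = x \<and> last ps = y \<and> distinct ps \<and>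
      set ps \<subseteq> W \<and> length ps \<le> n + 1 \<and> (\<forall>i < length ps - 1. F (ps ! i) (ps ! (i + 1)))"
      unfolding reach_within_def by blast
    then show ?thesis unfolding reach_within_def
      by (rule_tac x=ps in exI) auto
  next
    case False
    then obtain z where z: "rw W F n x z" "F z y" "y \<in> W" using Suc.prems(1) by auto
    from Suc.IH[OF z(1)] obtain ps where ps: "ps \<noteq> []" "hd ps = x" "last ps = z" "distinct ps"
      "set ps \<subseteq> W" "length ps \<le> n + 1" "\<forall>i < length ps - 1. F (ps ! i) (ps ! (i + 1))"
      unfolding reach_within_def by blast
    show ?thesis
    proof (cases "y \<in> set ps")
      case True
      then obtain i where i: "i < length ps" "ps ! i = y" by (meson in_set_conv_nth)
      define qs where "qs = take (Suc i) ps"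
      have "qs \<noteq> []" using i ps(1) unfolding qs_def by simp
      moreover have "hd qs = x" using ps(1,2) i unfolding qs_def by (simp add: hd_take)
      moreover have "last qs = y" proof -
        have "qs \<noteq> []" using i unfolding qs_def by (cases ps) auto
        then have "last qs = qs ! (length qs - 1)" by (simp add: last_conv_nth)
        also have "length qs = Suc i" using i unfolding qs_def by simp
        finally show ?thesis using i unfolding qs_def by simp
      qed
      moreover have "distinct qs" using ps(4) unfolding qs_def by simp
      moreover have "set qs \<subseteq> W" using ps(5) set_take_subset unfolding qs_def by fastforce
      moreover have "length qs \<le> Suc n + 1" using ps(6) unfolding qs_def by simp
      moreover have "\<forall>j < length qs - 1. F (qs ! j) (qs ! (j + 1))"
        using ps(7) i unfolding qs_def by auto
      ultimately show ?thesis unfolding reach_within_def by blast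
    next
      case False
      define qs where "qs = ps @ [y]"
      have "qs \<noteq> []" unfolding qs_def by simp
      moreover have "hd qs = x" using ps(1,2) unfolding qs_def by simp
      moreover have "last qs = y" unfolding qs_def by simp
      moreover have "distinct qs" using ps(4) False unfolding qs_def by simp
      moreover have "set qs \<subseteq> W" using ps(5) z(3) unfolding qs_def by simp
      moreover have "length qs \<le> Suc n + 1" using ps(6) unfolding qs_def by simp
      moreover have "\<forall>j < length qs - 1. F (qs ! j) (qs ! (j + 1))"
      proof (intro allI impI)
        fix j assume j: "j < length qs - 1"
        show "F (qs ! j) (qs ! (j + 1))"
        proof (cases "j < length ps - 1")
          case True
          then have "j < length ps" "Suc j < length ps" by auto
          then show ?thesis using ps(7) True unfolding qs_def by (simp add: nth_append)
        next
          case False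
          then have "j = length ps - 1" using j unfolding qs_def by simp
          then show ?thesis using ps(1,3) z(2) unfolding qs_def
            by (simp add: nth_append last_conv_nth)
        qed
      qed
      ultimately show ?thesis unfolding reach_within_def by blast
    qed
  qed
qed

definition bv :: "nat \<Rightarrow> 'a::linorder \<Rightarrow> 'a \<Rightarrow> nat \<Rightarrow> 'a + ('a \<times> 'a \<times> nat)" where
  "bv s c c' a = (if c < c' then sub_node s c c' a else sub_node s c' c (Suc s - a))"

lemma bv_0: "bv s c c' 0 = Inl c"
  unfolding bv_def sub_node_def by auto

lemma bv_last: "bv s c c' (Suc s) = Inl c'"
  unfolding bv_def sub_node_def by auto

lemma bv_mid: "1 \<le> a \<Longrightarrow> a \<le> s \<Longrightarrow>
   bv s c c' a = Inr (min c c', max c c', if c < c' then a else Suc s - a)"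
  unfolding bv_def sub_node_def by (auto simp: min_def max_def)

lemma sub_node_cases: "sub_node s u v i = Inl u \<or> sub_node s u v i = Inl v \<or> (\<exists>m. sub_node s u v i = Inr (u, v, m))"
  unfolding sub_node_def by auto

lemma sub_node_Inr: "sub_node s u v i = Inr (p, q, m) \<Longrightarrow> u = p \<and> v = q"
  unfolding sub_node_def by (auto split: if_splits)

locale sd =
  fixes r k :: nat and V :: "('a::linorder) set" and E :: "'a \<Rightarrow> 'a \<Rightarrow> bool"
  assumes r2: "2 \<le> r" and k1: "1 \<le> k" and gr: "graph V E" and md: "min_degree_ge V E (2 * r * k)"
begin

abbreviation "VG \<equiv> subdiv_V (r - 1) V E"
abbreviation "EG \<equiv> subdiv_E (r - 1) V E"

lemma E_in: "E x y \<Longrightarrow> x \<in> V \<and> y \<in> V" using gr unfolding graph_def by blast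
lemma E_sym: "E x y \<Longrightarrow> E y x" using gr unfolding graph_def by blast
lemma E_irr: "\<not> E x x" using gr unfolding graph_def by blast
lemma finV: "finite V" using gr unfolding graph_def by blast

lemma sucs: "Suc (r - 1) = r" using r2 by simp

lemma sub_node_in: "E u v \<Longrightarrow> u < v \<Longrightarrow> i \<le> Suc (r - 1) \<Longrightarrow> sub_node (r - 1) u v i \<in> VG"
  using E_in unfolding sub_node_def subdiv_V_def by auto

lemma EG_in: "EG x y \<Longrightarrow> x \<in> VG \<and> y \<in> VG"
proof -
  assume "EG x y"
  then obtain u v i where "E u v" "u < v" "i \<le> r - 1"
    "(x = sub_node (r-1) u v i \<and> y = sub_node (r-1) u v (i + 1)) \<or>
     (y = sub_node (r-1) u v i \<and> x = sub_node (r-1) u v (i + 1))"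
    unfolding subdiv_E_def by blast
  then show ?thesis using sub_node_in[of u v i] sub_node_in[of u v "i+1"] by auto
qed

lemma EG_sym: "EG x y \<Longrightarrow> EG y x"
  unfolding subdiv_E_def by blast

lemma EG_irr: "\<not> EG x x"
  unfolding subdiv_E_def sub_node_def by auto

lemma EG_Inr: "EG (Inr (p, q, m)) y \<Longrightarrow> y = Inl p \<or> y = Inl q \<or> (\<exists>m'. y = Inr (p, q, m'))"
proof -
  assume "EG (Inr (p, q, m)) y"
  then obtain u v i where "(Inr (p, q, m) = sub_node (r-1) u v i \<and> y = sub_node (r-1) u v (i + 1)) \<or>
     (y = sub_node (r-1) u v i \<and> Inr (p, q, m) = sub_node (r-1) u v (i + 1))"
    unfolding subdiv_E_def by blast
  then show ?thesis using sub_node_Inr sub_node_cases by metis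
qed

lemma bv_in: "E c c' \<Longrightarrow> a \<le> r \<Longrightarrow> bv (r - 1) c c' a \<in> VG"
proof -
  assume e: "E c c'" and a: "a \<le> r"
  have ne: "c \<noteq> c'" using e E_irr by auto
  show ?thesis
  proof (cases "c < c'")
    case True then show ?thesis using sub_node_in[OF e True] a sucs unfolding bv_def by simp
  next
    case False
    then have "c' < c" using ne by auto
    then show ?thesis using sub_node_in[OF E_sym[OF e]] a sucs False unfolding bv_def by simp
  qed
qed

lemma bv_edge: "E c c' \<Longrightarrow> a < r \<Longrightarrow> EG (bv (r - 1) c c' a) (bv (r - 1) c c' (Suc a))"
proof -
  assume e: "E c c'" and a: "a < r"
  have ne: "c \<noteq> c'" using e E_irr by auto
  show ?thesis
  proof (cases "c < c'")
    case True
    then show ?thesis unfolding bv_def subdiv_E_def using e a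
      by (rule_tac x=c in exI, rule_tac x=c' in exI, rule_tac x=a in exI) auto
  next
    case False
    then have lt: "c' < c" using ne by auto
    have "Suc (r - 1) - a = Suc (r - 1 - a)" "Suc (r - 1) - Suc a = r - 1 - a" using a r2 by auto
    then show ?thesis unfolding bv_def subdiv_E_def using E_sym[OF e] a lt False
      by (rule_tac x=c' in exI, rule_tac x=c in exI, rule_tac x="r - 1 - a" in exI) auto
  qed
qed

lemma minmax_eq: "(c::'a) \<noteq> c1 \<Longrightarrow> c \<noteq> c2 \<Longrightarrow> min c c1 = min c c2 \<Longrightarrow> max c c1 = max c c2 \<Longrightarrow> c1 = c2"
  by (auto simp: min_def max_def split: if_splits)

lemma G3: assumes "E c c1" "E c c2" "c1 \<noteq> c2" "1 \<le> a" "a < r"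
  shows "bv (r - 1) c c1 a \<noteq> bv (r - 1) c c2 (Suc a) \<and> \<not> EG (bv (r - 1) c c1 a) (bv (r - 1) c c2 (Suc a))"
proof -
  have n1: "c \<noteq> c1" "c \<noteq> c2" using assms E_irr by auto
  have x: "bv (r - 1) c c1 a = Inr (min c c1, max c c1, if c < c1 then a else Suc (r - 1) - a)"
    by (rule bv_mid) (use assms in auto)
  have ynot: "\<And>m. bv (r - 1) c c2 (Suc a) \<noteq> Inr (min c c1, max c c1, m)"
    and ynot2: "bv (r - 1) c c2 (Suc a) \<noteq> Inl (min c c1)" "bv (r - 1) c c2 (Suc a) \<noteq> Inl (max c c1)"
  proof -
    show "\<And>m. bv (r - 1) c c2 (Suc a) \<noteq> Inr (min c c1, max c c1, m)"
    proof (cases "Suc a \<le> r - 1")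
      case True
      then show "\<And>m. bv (r - 1) c c2 (Suc a) \<noteq> Inr (min c c1, max c c1, m)"
        using bv_mid[of "Suc a" "r - 1" c c2] minmax_eq[OF n1] assms(3) by auto
    next
      case False
      then have "Suc a = Suc (r - 1)" using assms r2 by auto
      then show "\<And>m. bv (r - 1) c c2 (Suc a) \<noteq> Inr (min c c1, max c c1, m)"
        using bv_last[of "r - 1" c c2] by simp
    qed
    show "bv (r - 1) c c2 (Suc a) \<noteq> Inl (min c c1)" "bv (r - 1) c c2 (Suc a) \<noteq> Inl (max c c1)"
    proof -
      have "bv (r - 1) c c2 (Suc a) = Inl c2 \<or> (\<exists>m. bv (r - 1) c c2 (Suc a) = Inr m)"
      proof (cases "Suc a \<le> r - 1")
        case True then show ?thesis using bv_mid[of "Suc a" "r - 1" c c2] by auto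
      next
        case False
        then have "Suc a = Suc (r - 1)" using assms r2 by auto
        then show ?thesis using bv_last[of "r - 1" c c2] by simp
      qed
      moreover have "c2 \<noteq> min c c1" "c2 \<noteq> max c c1" using n1 assms(3) by (auto simp: min_def max_def)
      ultimately show "bv (r - 1) c c2 (Suc a) \<noteq> Inl (min c c1)" "bv (r - 1) c c2 (Suc a) \<noteq> Inl (max c c1)"
        by auto
    qed
  qed
  show ?thesis
  proof
    show "bv (r - 1) c c1 a \<noteq> bv (r - 1) c c2 (Suc a)" using x ynot by metis
    show "\<not> EG (bv (r - 1) c c1 a) (bv (r - 1) c c2 (Suc a))"
      using EG_Inr[of "min c c1" "max c c1"] x ynot ynot2 by metis
  qed
qed

lemma G4: assumes "E u' c'" "u \<noteq> u'" "c' \<noteq> u"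
  shows "bv (r - 1) u' c' 1 \<noteq> Inl u \<and> \<not> EG (Inl u) (bv (r - 1) u' c' 1)"
proof -
  have x: "bv (r - 1) u' c' 1 = Inr (min u' c', max u' c', if u' < c' then 1 else Suc (r - 1) - 1)"
    by (rule bv_mid) (use r2 in auto)
  have "u \<noteq> min u' c'" "u \<noteq> max u' c'" using assms by (auto simp: min_def max_def)
  then show ?thesis using x EG_Inr[of "min u' c'" "max u' c'"] EG_sym by (metis sum.distinct(1) sum.inject(1))
qed

end

context sd begin

lemma lemB:
  assumes pk: "\<forall>x\<in>VG. p x < k"
    and Fd: "\<forall>x y. F x y \<longleftrightarrow> x \<in> VG \<and> y \<in> VG \<and> x \<noteq> y \<and> (EG x y \<noteq> R (p x) (p y))"
    and T: "T \<subseteq> {c'. E c c'}"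
    and R1: "\<forall>c'\<in>T. rw VG F 1 x0 (bv (r-1) c c' 1)"
  shows "card {c'\<in>T. \<not> rw VG F r x0 (Inl c')} \<le> (r-1)*k"
proof -
  let ?b = "\<lambda>c' a. bv (r-1) c c' a"
  define Bd where "Bd = {c'\<in>T. \<not> rw VG F r x0 (Inl c')}"
  define A where "A c' = Max {a \<in> {1..r}. rw VG F a x0 (?b c' a)}" for c'
  define f where "f c' = (A c', p (?b c' (Suc (A c'))))" for c'
  have props: "1 \<le> A c' \<and> A c' < r \<and> rw VG F (A c') x0 (?b c' (A c'))
      \<and> \<not> rw VG F (Suc (A c')) x0 (?b c' (Suc (A c')))" if "c' \<in> Bd" for c'
  proof -
    let ?S = "{a \<in> {1..r}. rw VG F a x0 (?b c' a)}"
    have fin: "finite ?S" by simp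
    have "1 \<in> ?S" using R1 that r2 unfolding Bd_def by auto
    then have ne: "?S \<noteq> {}" by blast
    have inS: "A c' \<in> ?S" unfolding A_def using Max_in[OF fin ne] .
    have "?b c' r = Inl c'" using bv_last[of "r-1" c c'] sucs by simp
    then have notr: "r \<notin> ?S" using that unfolding Bd_def by auto
    have "A c' \<noteq> r" using inS notr by auto
    then have lt: "A c' < r" using inS by auto
    have "Suc (A c') \<notin> ?S"
    proof
      assume "Suc (A c') \<in> ?S"
      then have "Suc (A c') \<le> A c'" unfolding A_def using Max_ge[OF fin] by blast
      then show False by simp
    qed
    then have "\<not> rw VG F (Suc (A c')) x0 (?b c' (Suc (A c')))" using lt inS by auto
    then show ?thesis using inS lt by auto
  qed
  have inj: "inj_on f Bd"
  proof (rule inj_onI)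
    fix c1 c2 assume c1: "c1 \<in> Bd" and c2: "c2 \<in> Bd" and fe: "f c1 = f c2"
    show "c1 = c2"
    proof (rule ccontr)
      assume ne: "c1 \<noteq> c2"
      define a where "a = A c1"
      have a2: "A c2 = a" and pe: "p (?b c1 (Suc a)) = p (?b c2 (Suc a))"
        using fe unfolding f_def a_def by auto
      from props[OF c1] have P1: "1 \<le> a" "a < r" "rw VG F a x0 (?b c1 a)"
        "\<not> rw VG F (Suc a) x0 (?b c1 (Suc a))" unfolding a_def by auto
      from props[OF c2] a2 have P2: "\<not> rw VG F (Suc a) x0 (?b c2 (Suc a))" by auto
      have e1: "E c c1" "E c c2" using c1 c2 T unfolding Bd_def by auto
      have Fd': "\<And>x y. F x y \<longleftrightarrow> x \<in> VG \<and> y \<in> VG \<and> x \<noteq> y \<and> (EG x y \<noteq> R (p x) (p y))"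
        using Fd by blast
      have xin: "?b c1 a \<in> VG" using bv_in[OF e1(1), of a] P1(2) by simp
      have yin: "?b c1 (Suc a) \<in> VG" "?b c2 (Suc a) \<in> VG"
        using bv_in[OF e1(1), of "Suc a"] bv_in[OF e1(2), of "Suc a"] P1(2) by simp_all
      have ed: "EG (?b c1 a) (?b c1 (Suc a))" using bv_edge[OF e1(1) P1(2)] .
      have xne: "?b c1 a \<noteq> ?b c1 (Suc a)"
      proof
        assume eq: "?b c1 a = ?b c1 (Suc a)"
        show False using ed EG_irr[of "?b c1 a"] unfolding eq[symmetric] by simp
      qed
      have "\<not> F (?b c1 a) (?b c1 (Suc a))" using rw_step[OF P1(3) _ yin(1)] P1(4) by blast
      then have Rt: "R (p (?b c1 a)) (p (?b c1 (Suc a)))"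
        using Fd'[of "?b c1 a" "?b c1 (Suc a)"] xin yin ed xne by simp
      have g3: "?b c1 a \<noteq> ?b c2 (Suc a) \<and> \<not> EG (?b c1 a) (?b c2 (Suc a))"
        using G3[OF e1 ne P1(1) P1(2)] .
      have "F (?b c1 a) (?b c2 (Suc a))"
        using Fd'[of "?b c1 a" "?b c2 (Suc a)"] xin yin g3 Rt pe by simp
      then have "rw VG F (Suc a) x0 (?b c2 (Suc a))" using rw_step[OF P1(3) _ yin(2)] by blast
      then show False using P2 by blast
    qed
  qed
  have img: "f ` Bd \<subseteq> {1..r-1} \<times> {0..<k}"
  proof
    fix z assume "z \<in> f ` Bd"
    then obtain c' where c': "c' \<in> Bd" "z = f c'" by blast
    have e: "E c c'" using c' T unfolding Bd_def by auto
    have "Suc (A c') \<le> r" using props[OF c'(1)] by simp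
    then have "?b c' (Suc (A c')) \<in> VG" using bv_in[OF e] by blast
    then have "p (?b c' (Suc (A c'))) < k" using pk by blast
    moreover have "A c' \<in> {1..r-1}" using props[OF c'(1)] by auto
    ultimately show "z \<in> {1..r-1} \<times> {0..<k}" using c'(2) unfolding f_def by simp
  qed
  have "card Bd \<le> card ({1..r-1} \<times> {0..<k})" by (rule card_inj_on_le[OF inj img]) simp
  moreover have "card ({1..r-1} \<times> {0..<k}) = (r-1)*k"
    unfolding card_cartesian_product by simp
  ultimately have "card Bd \<le> (r-1)*k" by linarith
  then show ?thesis unfolding Bd_def .
qed

lemma Inl_VG: "u \<in> V \<Longrightarrow> Inl u \<in> VG" unfolding subdiv_V_def by (rule UnI1) (rule imageI)

lemma finN: "finite {c'. E c c'}"
proof -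
  have "{c'. E c c'} \<subseteq> V" using E_in by blast
  then show ?thesis using finV finite_subset by blast
qed

lemma CL:
  assumes pk: "\<forall>x\<in>VG. p x < k"
    and Fd: "\<forall>x y. F x y \<longleftrightarrow> x \<in> VG \<and> y \<in> VG \<and> x \<noteq> y \<and> (EG x y \<noteq> R (p x) (p y))"
    and u0: "u0 \<in> V"
    and T: "T \<subseteq> {c'. E c c'} - {u0}"
    and R1: "\<forall>c'\<in>T. rw VG F 1 (Inl u0) (bv (r-1) c c' 1)"
    and cT: "r * k \<le> card T"
  shows "k < card {b\<in>V. rw VG F r (Inl u0) (Inl b)}"
proof -
  let ?G = "{c'\<in>T. rw VG F r (Inl u0) (Inl c')}"
  let ?B = "{c'\<in>T. \<not> rw VG F r (Inl u0) (Inl c')}"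
  have "T \<subseteq> {c'. E c c'}" using T by blast
  then have finT: "finite T" using finN finite_subset by blast
  have "T = ?G \<union> ?B" by blast
  moreover have "finite ?G" "finite ?B" using finT by simp_all
  moreover have "?G \<inter> ?B = {}" by blast
  ultimately have "card T = card ?G + card ?B"
    using card_Un_disjoint[of ?G ?B] by simp
  moreover have "card ?B \<le> (r-1)*k" using lemB[OF pk Fd \<open>T \<subseteq> {c'. E c c'}\<close> R1] .
  moreover have "(r-1)*k + k = r*k" using r2 by (cases r) auto
  ultimately have cG: "k \<le> card ?G" using cT by linarith
  have sub: "insert u0 ?G \<subseteq> {b\<in>V. rw VG F r (Inl u0) (Inl b)}"
  proof -
    have "rw VG F 0 (Inl u0) (Inl u0)" using Inl_VG[OF u0] by simp
    then have "rw VG F r (Inl u0) (Inl u0)" using rw_mono[of VG F 0 "Inl u0" "Inl u0" r] by simp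
    moreover have "?G \<subseteq> V" using \<open>T \<subseteq> {c'. E c c'}\<close> E_in by blast
    ultimately show ?thesis using u0 by auto
  qed
  have "u0 \<notin> ?G" using T by auto
  then have "card (insert u0 ?G) = Suc (card ?G)" using finT by simp
  moreover have "finite {b\<in>V. rw VG F r (Inl u0) (Inl b)}" using finV by simp
  ultimately have "Suc (card ?G) \<le> card {b\<in>V. rw VG F r (Inl u0) (Inl b)}"
    using card_mono[OF _ sub] by simp
  then show ?thesis using cG by linarith
qed

end

context sd begin

lemma bad_card:
  assumes pk: "\<forall>x\<in>VG. p x < k"
    and Fd: "\<forall>x y. F x y \<longleftrightarrow> x \<in> VG \<and> y \<in> VG \<and> x \<noteq> y \<and> (EG x y \<noteq> R (p x) (p y))"
  shows "card {u\<in>V. card {b\<in>V. rw VG F r (Inl u) (Inl b)} \<le> k} \<le> k"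
proof -
  define Bad where "Bad = {u\<in>V. card {b\<in>V. rw VG F r (Inl u) (Inl b)} \<le> k}"
  define Tu where "Tu u = {c'. E u c' \<and> rw VG F 1 (Inl u) (bv (r-1) u c' 1)}" for u
  have Fd': "\<And>x y. F x y \<longleftrightarrow> x \<in> VG \<and> y \<in> VG \<and> x \<noteq> y \<and> (EG x y \<noteq> R (p x) (p y))"
    using Fd by blast
  have own: "card (Tu u) < r*k" if "u \<in> Bad" for u
  proof (rule ccontr)
    assume "\<not> card (Tu u) < r*k"
    then have c: "r*k \<le> card (Tu u)" by simp
    have uV: "u \<in> V" using that unfolding Bad_def by simp
    have sub: "Tu u \<subseteq> {c'. E u c'} - {u}" unfolding Tu_def using E_irr by auto
    have r1: "\<forall>c'\<in>Tu u. rw VG F 1 (Inl u) (bv (r-1) u c' 1)" unfolding Tu_def by blast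
    have "k < card {b\<in>V. rw VG F r (Inl u) (Inl b)}" using CL[OF pk Fd uV sub r1 c] .
    then show False using that unfolding Bad_def by simp
  qed
  have inj: "inj_on (\<lambda>u. p (Inl u)) Bad"
  proof (rule inj_onI)
    fix u u2 assume u: "u \<in> Bad" and u2: "u2 \<in> Bad" and pe: "p (Inl u) = p (Inl u2)"
    show "u = u2"
    proof (rule ccontr)
      assume ne: "u \<noteq> u2"
      have uV: "u \<in> V" and u2V: "u2 \<in> V" using u u2 unfolding Bad_def by auto
      define N where "N = {c'. E u c'}"
      define Bu where "Bu = N - Tu u"
      have NV: "N = {c'\<in>V. E u c'}" unfolding N_def using E_in by blast
      have dg: "2*r*k \<le> card N" using md uV unfolding min_degree_ge_def degree_def NV by blast
      have finN': "finite N" unfolding N_def using finN .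
      have TuN: "Tu u \<subseteq> N" unfolding Tu_def N_def by blast
      have "card Bu = card N - card (Tu u)" unfolding Bu_def using card_Diff_subset[OF _ TuN] finN'
        finite_subset[OF TuN finN'] by simp
      moreover have "card (Tu u) < r*k" using own[OF u] .
      ultimately have cB: "r*k + 1 \<le> card Bu" using dg by simp
      define T2 where "T2 = Bu - {u2}"
      have finBu: "finite Bu" unfolding Bu_def using finN' by simp
      have "card T2 = (if u2 \<in> Bu then card Bu - 1 else card Bu)"
        unfolding T2_def using card_Diff_singleton_if[of Bu u2] by blast
      then have "card Bu \<le> card T2 + 1" by (simp split: if_splits)
      then have cT2: "r*k \<le> card T2" using cB by simp
      have sub2: "T2 \<subseteq> {c'. E u c'} - {u2}" unfolding T2_def Bu_def N_def by blast
      have reach: "\<forall>c'\<in>T2. rw VG F 1 (Inl u2) (bv (r-1) u c' 1)"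
      proof
        fix c' assume c': "c' \<in> T2"
        then have e: "E u c'" and nr: "\<not> rw VG F 1 (Inl u) (bv (r-1) u c' 1)" and c'ne: "c' \<noteq> u2"
          unfolding T2_def Bu_def Tu_def N_def by auto
        have uin: "Inl u \<in> VG" "Inl u2 \<in> VG" using Inl_VG uV u2V by auto
        have yin: "bv (r-1) u c' 1 \<in> VG" using bv_in[OF e, of 1] r2 by simp
        have ed0: "EG (bv (r-1) u c' 0) (bv (r-1) u c' (Suc 0))" using bv_edge[OF e, of 0] r2 by simp
        then have ed: "EG (Inl u) (bv (r-1) u c' 1)" by (simp add: bv_0)
        have ne1: "Inl u \<noteq> bv (r-1) u c' 1"
        proof
          assume eq: "Inl u = bv (r-1) u c' 1"
          show False using ed EG_irr[of "Inl u"] unfolding eq[symmetric] by simp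
        qed
        have rw0: "rw VG F 0 (Inl u) (Inl u)" using uin by simp
        have "\<not> F (Inl u) (bv (r-1) u c' 1)"
        proof
          assume "F (Inl u) (bv (r-1) u c' 1)"
          then have "rw VG F (Suc 0) (Inl u) (bv (r-1) u c' 1)" using rw_step[OF rw0 _ yin] by blast
          then show False using nr by simp
        qed
        then have Rt: "R (p (Inl u)) (p (bv (r-1) u c' 1))"
          using Fd'[of "Inl u" "bv (r-1) u c' 1"] uin yin ed ne1 by simp
        have g4: "bv (r-1) u c' 1 \<noteq> Inl u2 \<and> \<not> EG (Inl u2) (bv (r-1) u c' 1)"
          using G4[OF e, of u2] ne c'ne by auto
        have "F (Inl u2) (bv (r-1) u c' 1)"
          using Fd'[of "Inl u2" "bv (r-1) u c' 1"] uin yin g4 Rt pe by auto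
        moreover have r0: "rw VG F 0 (Inl u2) (Inl u2)" using uin by simp
        ultimately have "rw VG F (Suc 0) (Inl u2) (bv (r-1) u c' 1)" using rw_step[OF r0 _ yin] by blast
        then show "rw VG F 1 (Inl u2) (bv (r-1) u c' 1)" by simp
      qed
      have "k < card {b\<in>V. rw VG F r (Inl u2) (Inl b)}" using CL[OF pk Fd u2V sub2 reach cT2] .
      then show False using u2 unfolding Bad_def by simp
    qed
  qed
  have img: "(\<lambda>u. p (Inl u)) ` Bad \<subseteq> {0..<k}"
  proof
    fix z assume "z \<in> (\<lambda>u. p (Inl u)) ` Bad"
    then obtain u where "u \<in> Bad" "z = p (Inl u)" by blast
    moreover then have "Inl u \<in> VG" using Inl_VG unfolding Bad_def by simp
    ultimately show "z \<in> {0..<k}" using pk by simp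
  qed
  have "card Bad \<le> card {0..<k}" by (rule card_inj_on_le[OF inj img]) simp
  then show ?thesis unfolding Bad_def by simp
qed

end

context sd begin

lemma runner:
  assumes fwf: "flipper_wins_from r j VG EG Ecur v" and jk: "j \<le> k"
  shows "card {b\<in>V. rw VG Ecur r v (Inl b)} \<le> k"
  using fwf
proof (induction rule: flipper_wins_from.induct)
  case (step F Ecur v)
  from step.hyps(1) obtain p R where pj: "\<forall>x\<in>VG. p x < j"
    and Fd: "\<forall>x y. F x y \<longleftrightarrow> x \<in> VG \<and> y \<in> VG \<and> x \<noteq> y \<and> (EG x y \<noteq> R (p x) (p y))"
    unfolding is_flip_def by blast
  have pk: "\<forall>x\<in>VG. p x < k" using pj jk by fastforce
  define P where "P = {b\<in>V. rw VG Ecur r v (Inl b)}"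
  define Bad where "Bad = {u\<in>V. card {b\<in>V. rw VG F r (Inl u) (Inl b)} \<le> k}"
  have cB: "card Bad \<le> k" unfolding Bad_def using bad_card[OF pk Fd] .
  show ?case
  proof (rule ccontr)
    assume "\<not> card {b\<in>V. rw VG Ecur r v (Inl b)} \<le> k"
    then have cP: "k < card P" unfolding P_def by simp
    have "\<not> P \<subseteq> Bad"
    proof
      assume "P \<subseteq> Bad"
      moreover have "finite Bad" unfolding Bad_def using finV by simp
      ultimately have "card P \<le> card Bad" by (rule card_mono[rotated])
      then show False using cP cB by simp
    qed
    then obtain b where bP: "b \<in> P" and bB: "b \<notin> Bad" by blast
    have bV: "b \<in> V" and rb: "rw VG Ecur r v (Inl b)" using bP unfolding P_def by auto
    have big: "k < card {b'\<in>V. rw VG F r (Inl b) (Inl b')}" using bB bV unfolding Bad_def by simp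
    have reach: "reach_within r VG Ecur v (Inl b)" using rw_reach[OF rb] .
    have "\<exists>b'. b' \<in> {b'\<in>V. rw VG F r (Inl b) (Inl b')} \<and> b' \<noteq> b"
    proof (rule ccontr)
      assume "\<not> ?thesis"
      then have "{b'\<in>V. rw VG F r (Inl b) (Inl b')} \<subseteq> {b}" by blast
      then have "card {b'\<in>V. rw VG F r (Inl b) (Inl b')} \<le> 1"
        using card_mono[of "{b}"] by fastforce
      then show False using big k1 by simp
    qed
    then obtain b' where b': "rw VG F r (Inl b) (Inl b')" "b' \<noteq> b" by blast
    have "\<exists>z. F (Inl b) z" using rw_neighbor[OF b'(1)] b'(2) by simp
    then have niso: "\<not> isolated F (Inl b)" unfolding isolated_def by blast
    from step.IH reach niso have "card {b'\<in>V. rw VG F r (Inl b) (Inl b')} \<le> k" by blast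
    then show False using big by simp
  qed
qed

lemma initial:
  assumes a0: "a0 \<in> V"
  shows "k < card {b\<in>V. rw VG EG r (Inl a0) (Inl b)}"
proof -
  have path: "rw VG EG a (Inl a0) (bv (r-1) a0 c' a)" if e: "E a0 c'" and a: "a \<le> r" for c' a
    using a
  proof (induction a)
    case 0 then show ?case using Inl_VG[OF a0] by (simp add: bv_0)
  next
    case (Suc a)
    then have IH: "rw VG EG a (Inl a0) (bv (r-1) a0 c' a)" by simp
    have "a < r" using Suc.prems by simp
    then show ?case using rw_step[OF IH bv_edge[OF e] bv_in[OF e Suc.prems]] by blast
  qed
  define N where "N = {c'. E a0 c'}"
  have NV: "N = {c'\<in>V. E a0 c'}" unfolding N_def using E_in by blast
  have dg: "2*r*k \<le> card N" using md a0 unfolding min_degree_ge_def degree_def NV by blast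
  have "k \<le> 2*r*k" using r2 by simp
  then have cN: "k \<le> card N" using dg by linarith
  have sub: "insert a0 N \<subseteq> {b\<in>V. rw VG EG r (Inl a0) (Inl b)}"
  proof
    fix b assume "b \<in> insert a0 N"
    then consider "b = a0" | "E a0 b" unfolding N_def by blast
    then show "b \<in> {b\<in>V. rw VG EG r (Inl a0) (Inl b)}"
    proof cases
      case 1
      have r0: "rw VG EG 0 (Inl a0) (Inl a0)" using Inl_VG[OF a0] by simp
      show ?thesis using rw_mono[OF r0, of r] 1 a0 by simp
    next
      case 2
      have "rw VG EG r (Inl a0) (bv (r-1) a0 b r)" using path[OF 2] by simp
      moreover have "bv (r-1) a0 b r = Inl b" using bv_last[of "r-1" a0 b] sucs by simp
      ultimately show ?thesis using E_in[OF 2] by simp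
    qed
  qed
  have "a0 \<notin> N" unfolding N_def using E_irr by blast
  moreover have "finite N" unfolding N_def using finN .
  ultimately have "card (insert a0 N) = Suc (card N)" by simp
  moreover have "finite {b\<in>V. rw VG EG r (Inl a0) (Inl b)}" using finV by simp
  ultimately have "Suc (card N) \<le> card {b\<in>V. rw VG EG r (Inl a0) (Inl b)}"
    using card_mono[OF _ sub] by simp
  then show ?thesis using cN by simp
qed

lemma finVG: "finite VG"
proof -
  have "VG \<subseteq> Inl ` V \<union> Inr ` (V \<times> V \<times> {1..r-1})"
    unfolding subdiv_V_def using E_in by auto
  moreover have "finite (Inl ` V \<union> Inr ` (V \<times> V \<times> {1..r-1}))" using finV by simp
  ultimately show ?thesis using finite_subset by blast
qed

lemma win: "flipper_wins r (card VG) VG EG"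
proof -
  obtain h where h: "bij_betw h VG {0..<card VG}" using ex_bij_betw_finite_nat[OF finVG] by blast
  define R where "R i j = (\<exists>x\<in>VG. \<exists>y\<in>VG. h x = i \<and> h y = j \<and> EG x y)" for i j
  have hinj: "inj_on h VG" using h bij_betw_def by blast
  have Req: "R (h x) (h y) = EG x y" if "x \<in> VG" "y \<in> VG" for x y
  proof
    assume "R (h x) (h y)"
    then obtain x' y' where "x' \<in> VG" "y' \<in> VG" "h x' = h x" "h y' = h y" "EG x' y'"
      unfolding R_def by blast
    then show "EG x y" using hinj that inj_on_eq_iff by metis
  next
    assume "EG x y" then show "R (h x) (h y)" unfolding R_def using that by blast
  qed
  have flip: "is_flip (card VG) VG EG (\<lambda>_ _. False)"
    unfolding is_flip_def
  proof (intro exI conjI)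
    show "\<forall>x\<in>VG. h x < card VG" using h bij_betwE by fastforce
    show "\<forall>i j. R i j = R j i" unfolding R_def using EG_sym by blast
    show "\<forall>x y. False = (x \<in> VG \<and> y \<in> VG \<and> x \<noteq> y \<and> EG x y \<noteq> R (h x) (h y))"
      using Req by blast
  qed
  show ?thesis unfolding flipper_wins_def
  proof
    fix v0 assume "v0 \<in> VG"
    show "flipper_wins_from r (card VG) VG EG EG v0"
      by (rule flipper_wins_from.step[OF flip]) (simp add: isolated_def)
  qed
qed

end

theorem mainTheorem10:
  fixes r k :: nat and V :: "('a::linorder) set" and E :: "'a \<Rightarrow> 'a \<Rightarrow> bool"
  assumes "r \<ge> 2" and "k \<ge> 1"
    and "graph V E" and "V \<noteq> {}"
    and "min_degree_ge V E (2 * r * k)"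
  shows "fw r (subdiv_V (r - 1) V E) (subdiv_E (r - 1) V E) > k"
proof -
  interpret sd r k V E using assms by unfold_locales auto
  obtain a0 where a0: "a0 \<in> V" using assms(4) by blast
  have nowin: "\<not> flipper_wins r j VG EG" if jk: "j \<le> k" for j
  proof
    assume "flipper_wins r j VG EG"
    then have "flipper_wins_from r j VG EG EG (Inl a0)"
      unfolding flipper_wins_def using Inl_VG[OF a0] by blast
    then have "card {b\<in>V. rw VG EG r (Inl a0) (Inl b)} \<le> k" using runner jk by blast
    then show False using initial[OF a0] by simp
  qed
  show ?thesis
  proof (rule ccontr)
    assume "\<not> ?thesis"
    then have le: "fw r VG EG \<le> k" by simp
    have "flipper_wins r (fw r VG EG) VG EG"
      unfolding fw_def using LeastI[of "\<lambda>j. flipper_wins r j VG EG", OF win] .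
    then show False using nowin[OF le] by blast
  qed
qed

end
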